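(* Let $X$ and $Y$ be Hausdorff compact spaces and $\pi: X \to Y$ a fully closed continuous surjection. For each $y \in Y$ fix a point $0_y \in \pi^{-1}(y)$ and let $H^0_y = \{g \in C(\pi^{-1}(y)) : g(0_y) = 0\}$ with the supremum norm. Let $H = \bigoplus_{c_0(Y)} H^0_y$ be the $c_0$-sum, i.e. the space of families $h = (h_y)_{y\in Y}$ with $h_y \in H^0_y$ such that for every $\varepsilon>0$ the set $\{y : \|h_y\| > \varepsilon\}$ is finite, normed by $\|h\| = \sup_y \|h_y\|$. For $f \in C(X)$ put $f_y = \left(f - f(0_y)\right)|_{\pi^{-1}(y)} \in H^0_y$ and $T f = (f_y)_{y \in Y}$. Then for every $h \in H$ there exists $f \in C(X)$ with $Tf = h$; that is, $T$ maps $C(X)$ onto $H$.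
   Context: A continuous surjection $\pi: X \to Y$ between Hausdorff compacta is fully closed if for any two closed disjoint subsets $F_1, F_2 \subset X$ the set $\pi(F_1)\cap\pi(F_2)$ is finite. $C(K)$ denotes the Banach space of real continuous functions on $K$ with the sup norm. *)

theory Defs
  imports "HOL-Analysis.Analysis"
begin

definition fully_closed :: "'a topology \<Rightarrow> 'b topology \<Rightarrow> ('a \<Rightarrow> 'b) \<Rightarrow> bool" where
  "fully_closed X Y \<pi> \<longleftrightarrow>
     continuous_map X Y \<pi> \<and> \<pi> ` topspace X = topspace Y \<and>
     (\<forall>F1 F2. closedin X F1 \<and> closedin X F2 \<and> F1 \<inter> F2 = {} \<longrightarrow>
        finite (\<pi> ` F1 \<inter> \<pi> ` F2))"

definition fibre :: "'a topology \<Rightarrow> ('a \<Rightarrow> 'b) \<Rightarrow> 'b \<Rightarrow> 'a set" where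
  "fibre X \<pi> y = {x \<in> topspace X. \<pi> x = y}"

definition fibre_norm :: "'a topology \<Rightarrow> ('a \<Rightarrow> 'b) \<Rightarrow> 'b \<Rightarrow> ('a \<Rightarrow> real) \<Rightarrow> real" where
  "fibre_norm X \<pi> y g = (SUP x \<in> fibre X \<pi> y. \<bar>g x\<bar>)"

definition in_c0_sum :: "'a topology \<Rightarrow> 'b topology \<Rightarrow> ('a \<Rightarrow> 'b) \<Rightarrow> ('b \<Rightarrow> 'a) \<Rightarrow> ('b \<Rightarrow> 'a \<Rightarrow> real) \<Rightarrow> bool" where
  "in_c0_sum X Y \<pi> z h \<longleftrightarrow>
     (\<forall>y \<in> topspace Y. continuous_map (subtopology X (fibre X \<pi> y)) euclideanreal (h y)
                       \<and> h y (z y) = 0) \<and>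
     (\<forall>\<epsilon>>0. finite {y \<in> topspace Y. fibre_norm X \<pi> y (h y) > \<epsilon>})"

end

theory Submission imports Defs begin

definition satZ :: "'a topology \<Rightarrow> ('a \<Rightarrow> 'b) \<Rightarrow> 'b set \<Rightarrow> 'a set \<Rightarrow> bool" where
  "satZ X \<pi> A U \<longleftrightarrow> (\<forall>x\<in>U. \<forall>x'\<in>topspace X. \<pi> x' = \<pi> x \<and> \<pi> x \<notin> A \<longrightarrow> x' \<in> U)"

definition ZT :: "'a topology \<Rightarrow> ('a \<Rightarrow> 'b) \<Rightarrow> 'b set \<Rightarrow> 'a topology" where
  "ZT X \<pi> A = topology (\<lambda>U. openin X U \<and> satZ X \<pi> A U)"

lemma istopology_ZT: "istopology (\<lambda>U. openin X U \<and> satZ X \<pi> A U)"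
  unfolding istopology_def satZ_def by auto

lemma openin_ZT: "openin (ZT X \<pi> A) U \<longleftrightarrow> openin X U \<and> satZ X \<pi> A U"
  unfolding ZT_def by (simp add: topology_inverse'[OF istopology_ZT[of X \<pi> A]])

lemma topspace_ZT: "topspace (ZT X \<pi> A) = topspace X"
proof -
  have "openin (ZT X \<pi> A) (topspace X)" unfolding openin_ZT satZ_def by auto
  then have "topspace X \<subseteq> topspace (ZT X \<pi> A)" by (simp add: openin_subset)
  moreover have "topspace (ZT X \<pi> A) \<subseteq> topspace X"
    by (metis openin_ZT openin_subset openin_topspace)
  ultimately show ?thesis by blast
qed

lemma satZ_compl:
  assumes "S \<subseteq> topspace X"
  shows "satZ X \<pi> A (topspace X - S) \<longleftrightarrow> satZ X \<pi> A S"
proof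
  assume L: "satZ X \<pi> A (topspace X - S)"
  show "satZ X \<pi> A S" unfolding satZ_def
  proof (intro ballI impI)
    fix x x' assume x: "x \<in> S" "x' \<in> topspace X" "\<pi> x' = \<pi> x \<and> \<pi> x \<notin> A"
    show "x' \<in> S"
    proof (rule ccontr)
      assume "x' \<notin> S"
      then have "x' \<in> topspace X - S" using x by simp
      moreover have "x \<in> topspace X" using x assms by auto
      ultimately have "x \<in> topspace X - S" using L x unfolding satZ_def by metis
      then show False using x by simp
    qed
  qed
next
  assume L: "satZ X \<pi> A S"
  show "satZ X \<pi> A (topspace X - S)" unfolding satZ_def
  proof (intro ballI impI)
    fix x x' assume x: "x \<in> topspace X - S" "x' \<in> topspace X" "\<pi> x' = \<pi> x \<and> \<pi> x \<notin> A"
    show "x' \<in> topspace X - S"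
    proof (rule ccontr)
      assume "x' \<notin> topspace X - S"
      then have "x' \<in> S" using x by simp
      moreover have "x \<in> topspace X" "\<pi> x = \<pi> x'" "\<pi> x' \<notin> A" using x by auto
      ultimately have "x \<in> S" using L unfolding satZ_def by metis
      then show False using x by simp
    qed
  qed
qed

lemma closedin_ZT: "closedin (ZT X \<pi> A) S \<longleftrightarrow> closedin X S \<and> satZ X \<pi> A S"
  unfolding closedin_def[of "ZT X \<pi> A"] openin_ZT topspace_ZT
  using satZ_compl closedin_def by metis

lemma cont_ZT_imp:
  assumes "continuous_map (ZT X \<pi> A) euclideanreal e"
  shows "continuous_map X euclideanreal e"
  using assms unfolding continuous_map topspace_ZT openin_ZT by simp

lemma cont_ZT_const:
  assumes "continuous_map (ZT X \<pi> A) euclideanreal e"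
    and "x \<in> topspace X" "x' \<in> topspace X" "\<pi> x = \<pi> x'" "\<pi> x \<notin> A"
  shows "e x = e x'"
proof (rule ccontr)
  assume ne: "e x \<noteq> e x'"
  have "open (- {e x'})" by auto
  then have "openin (ZT X \<pi> A) {t \<in> topspace (ZT X \<pi> A). e t \<in> - {e x'}}"
    using assms(1) unfolding continuous_map by auto
  then have "satZ X \<pi> A {t \<in> topspace X. e t \<in> - {e x'}}"
    unfolding openin_ZT topspace_ZT by auto
  moreover have "x \<in> {t \<in> topspace X. e t \<in> - {e x'}}" using ne assms(2) by auto
  ultimately have "x' \<in> {t \<in> topspace X. e t \<in> - {e x'}}"
    using assms(3-5) unfolding satZ_def by (metis (no_types, lifting))
  then show False by simp
qed


lemma fc_facts:
  assumes "fully_closed X Y \<pi>"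
  shows "continuous_map X Y \<pi>" "\<pi> ` topspace X = topspace Y"
    "\<And>F1 F2. closedin X F1 \<Longrightarrow> closedin X F2 \<Longrightarrow> F1 \<inter> F2 = {} \<Longrightarrow> finite (\<pi> ` F1 \<inter> \<pi> ` F2)"
  using assms unfolding fully_closed_def by auto

lemma closedin_preimage_finite:
  assumes "continuous_map X Y \<pi>" "Hausdorff_space Y" "finite B"
  shows "closedin X {x \<in> topspace X. \<pi> x \<in> B}"
proof -
  have "closedin Y (B \<inter> topspace Y)"
    using assms by (meson Hausdorff_imp_t1_space finite_Int inf_le2 t1_space_closedin_finite)
  then have "closedin X {x \<in> topspace X. \<pi> x \<in> B \<inter> topspace Y}"
    using assms(1) closedin_continuous_map_preimage by blast
  moreover have "{x \<in> topspace X. \<pi> x \<in> B \<inter> topspace Y} = {x \<in> topspace X. \<pi> x \<in> B}"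
    using assms(1) by (auto dest: continuous_map_image_subset_topspace)
  ultimately show ?thesis by simp
qed

lemma sat_nbhd:
  assumes cX: "compact_space X" and hX: "Hausdorff_space X" and hY: "Hausdorff_space Y"
    and fc: "fully_closed X Y \<pi>" and fA: "finite A"
    and C: "closedin X C" "satZ X \<pi> A C" and V: "openin X V" "C \<subseteq> V"
  shows "\<exists>W. openin X W \<and> satZ X \<pi> A W \<and> C \<subseteq> W \<and> W \<subseteq> V"
proof -
  have nX: "normal_space X" by (rule compact_Hausdorff_or_regular_imp_normal_space[OF cX disjI1[OF hX]])
  obtain V' where V': "openin X V'" "C \<subseteq> V'" "X closure_of V' \<subseteq> V"
    using nX C(1) V unfolding normal_space_alt by meson
  define K where "K = X closure_of V'"
  define D where "D = topspace X - V"
  have cK: "closedin X K" unfolding K_def by simp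
  have cD: "closedin X D" unfolding D_def using V by blast
  have KD: "K \<inter> D = {}" using V' unfolding K_def D_def by auto
  have cont: "continuous_map X Y \<pi>" using fc_facts[OF fc] by blast
  define B where "B = \<pi> ` K \<inter> \<pi> ` D"
  have fB: "finite B" unfolding B_def using fc_facts(3)[OF fc cK cD KD] .
  define P where "P = {x \<in> topspace X. \<pi> x \<in> B - A}"
  have cP: "closedin X P" unfolding P_def
    using closedin_preimage_finite[OF cont hY] fB by blast
  have cmap: "closed_map X Y \<pi>" using continuous_imp_closed_map[OF cont cX hY] .
  have "closedin Y (\<pi> ` D)" using cmap cD closed_map_def by blast
  define Q where "Q = {x \<in> topspace X. \<pi> x \<in> \<pi> ` D}"
  have cQ: "closedin X Q" unfolding Q_def
    using closedin_continuous_map_preimage[OF cont \<open>closedin Y (\<pi> ` D)\<close>] .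
  define W where "W = (V' - P) \<union> (topspace X - Q)"
  have oW: "openin X W" unfolding W_def using V' cP cQ
    by (simp add: openin_Un openin_diff)
  have sW: "satZ X \<pi> A W" unfolding satZ_def
  proof (intro ballI impI)
    fix x x' assume x: "x \<in> W" "x' \<in> topspace X" "\<pi> x' = \<pi> x \<and> \<pi> x \<notin> A"
    show "x' \<in> W"
    proof (cases "\<pi> x \<in> \<pi> ` D")
      case True
      have "x \<in> V' - P \<or> x \<in> topspace X - Q" using x unfolding W_def by simp
      moreover have xt: "x \<in> topspace X" using x(1) V'(1) openin_subset unfolding W_def by auto
      moreover have "x \<in> Q" unfolding Q_def using True xt by simp
      ultimately have xv: "x \<in> V'" "x \<notin> P" by auto
      then have "x \<in> K" unfolding K_def using V'(1) by (meson closure_of_subset openin_subset subsetD)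
      then have "\<pi> x \<in> B" using True unfolding B_def by simp
      then have "x \<in> P" using x xt unfolding P_def by simp
      then show ?thesis using xv by simp
    next
      case False
      then have "x' \<notin> Q" using x unfolding Q_def by auto
      then show ?thesis using x unfolding W_def by simp
    qed
  qed
  have CW: "C \<subseteq> W"
  proof
    fix x assume x: "x \<in> C"
    have xt: "x \<in> topspace X" using x C closedin_subset by blast
    show "x \<in> W"
    proof (cases "\<pi> x \<in> A")
      case True
      then have "x \<notin> P" unfolding P_def by blast
      then show ?thesis using x V' unfolding W_def by blast
    next
      case False
      have "x \<notin> Q"
      proof
        assume "x \<in> Q"
        then obtain d where d: "d \<in> D" "\<pi> d = \<pi> x" unfolding Q_def by auto
        then have "d \<in> topspace X" unfolding D_def by blast
        then have "d \<in> C" using C(2) x d False unfolding satZ_def by blast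
        then show False using d V unfolding D_def by blast
      qed
      then show ?thesis using xt unfolding W_def by blast
    qed
  qed
  have WV: "W \<subseteq> V"
  proof
    fix x assume "x \<in> W"
    then have "x \<in> V' \<or> (x \<in> topspace X \<and> x \<notin> Q)" unfolding W_def by blast
    then show "x \<in> V"
    proof
      assume "x \<in> V'" then show ?thesis using V'(1,3) by (meson closure_of_subset openin_subset subsetD)
    next
      assume "x \<in> topspace X \<and> x \<notin> Q"
      then show ?thesis unfolding Q_def D_def by auto
    qed
  qed
  show ?thesis using oW sW CW WV by blast
qed

lemma normal_ZT:
  assumes cX: "compact_space X" and hX: "Hausdorff_space X" and hY: "Hausdorff_space Y"
    and fc: "fully_closed X Y \<pi>" and fA: "finite A"
  shows "normal_space (ZT X \<pi> A)"
  unfolding normal_space_def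
proof (intro allI impI)
  fix S T assume ST: "closedin (ZT X \<pi> A) S \<and> closedin (ZT X \<pi> A) T \<and> disjnt S T"
  have nX: "normal_space X" by (rule compact_Hausdorff_or_regular_imp_normal_space[OF cX disjI1[OF hX]])
  have S: "closedin X S" "satZ X \<pi> A S" and T: "closedin X T" "satZ X \<pi> A T"
    using ST closedin_ZT by blast+
  obtain U V where UV: "openin X U" "openin X V" "S \<subseteq> U" "T \<subseteq> V" "disjnt U V"
    using nX S T ST unfolding normal_space_def by meson
  obtain U' where U': "openin X U'" "satZ X \<pi> A U'" "S \<subseteq> U'" "U' \<subseteq> U"
    using sat_nbhd[OF cX hX hY fc fA S UV(1) UV(3)] by blast
  obtain V' where V': "openin X V'" "satZ X \<pi> A V'" "T \<subseteq> V'" "V' \<subseteq> V"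
    using sat_nbhd[OF cX hX hY fc fA T UV(2) UV(4)] by blast
  show "\<exists>U V. openin (ZT X \<pi> A) U \<and> openin (ZT X \<pi> A) V \<and> S \<subseteq> U \<and> T \<subseteq> V \<and> disjnt U V"
    using U' V' UV(5) unfolding openin_ZT
    by (meson disjnt_subset1 disjnt_subset2)
qed


lemma closedin_fibre:
  assumes "continuous_map X Y \<pi>" "Hausdorff_space Y"
  shows "closedin X (fibre X \<pi> y)"
proof -
  have "closedin X {x \<in> topspace X. \<pi> x \<in> {y}}"
    using closedin_preimage_finite[OF assms, of "{y}"] by simp
  moreover have "{x \<in> topspace X. \<pi> x \<in> {y}} = fibre X \<pi> y" unfolding fibre_def by simp
  ultimately show ?thesis by simp
qed

lemma subtopology_ZT:
  assumes "closedin X F" "\<And>x. x \<in> F \<Longrightarrow> \<pi> x \<in> A"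
  shows "subtopology (ZT X \<pi> A) F = subtopology X F"
  unfolding topology_eq
proof (intro allI iffI)
  fix U assume "openin (subtopology (ZT X \<pi> A) F) U"
  then obtain T where "openin (ZT X \<pi> A) T" "U = T \<inter> F" unfolding openin_subtopology by blast
  then show "openin (subtopology X F) U" unfolding openin_subtopology openin_ZT by blast
next
  fix U assume "openin (subtopology X F) U"
  then obtain T where T: "openin X T" "U = T \<inter> F" unfolding openin_subtopology by blast
  define T' where "T' = T \<union> (topspace X - F)"
  have oT': "openin X T'" unfolding T'_def using T(1) assms(1) by (simp add: openin_Un openin_diff)
  have sT': "satZ X \<pi> A T'" unfolding satZ_def
  proof (intro ballI impI)
    fix x x' assume x: "x \<in> T'" "x' \<in> topspace X" "\<pi> x' = \<pi> x \<and> \<pi> x \<notin> A"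
    show "x' \<in> T'"
    proof (cases "x \<in> F")
      case True
      then show ?thesis using x assms(2) by blast
    next
      case False
      then have "x \<in> topspace X - F" using x T(1) openin_subset unfolding T'_def by auto
      then have "x' \<in> topspace X - F" using assms(2) x by (metis DiffI)
      then show ?thesis unfolding T'_def by simp
    qed
  qed
  have "U = T' \<inter> F" unfolding T'_def T(2) by auto
  then show "openin (subtopology (ZT X \<pi> A) F) U"
    unfolding openin_subtopology openin_ZT using oT' sT' by blast
qed

lemma extension:
  assumes cX: "compact_space X" and hX: "Hausdorff_space X" and hY: "Hausdorff_space Y"
    and fc: "fully_closed X Y \<pi>" and fA: "finite A"
    and hc: "\<And>y. y \<in> A \<Longrightarrow> continuous_map (subtopology X (fibre X \<pi> y)) euclideanreal (h y)"
    and M: "M \<ge> 0"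
    and hb: "\<And>y x. y \<in> A \<Longrightarrow> x \<in> fibre X \<pi> y \<Longrightarrow> \<bar>h y x\<bar> \<le> M"
  shows "\<exists>e. continuous_map X euclideanreal e \<and> (\<forall>x\<in>topspace X. \<bar>e x\<bar> \<le> M)
     \<and> (\<forall>y\<in>A. \<forall>x\<in>fibre X \<pi> y. e x = h y x)
     \<and> (\<forall>x x'. x \<in> topspace X \<longrightarrow> x' \<in> topspace X \<longrightarrow> \<pi> x = \<pi> x' \<longrightarrow> \<pi> x \<notin> A \<longrightarrow> e x = e x')"
proof -
  have cont: "continuous_map X Y \<pi>" using fc_facts[OF fc] by blast
  define F where "F = {x \<in> topspace X. \<pi> x \<in> A}"
  have cF: "closedin X F" unfolding F_def using closedin_preimage_finite[OF cont hY fA] .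
  have FA: "\<And>x. x \<in> F \<Longrightarrow> \<pi> x \<in> A" unfolding F_def by simp
  have sF: "satZ X \<pi> A F" unfolding satZ_def F_def by auto
  have cZF: "closedin (ZT X \<pi> A) F" using cF sF closedin_ZT by blast
  have nZ: "normal_space (ZT X \<pi> A)" using normal_ZT[OF cX hX hY fc fA] .
  define g where "g x = h (\<pi> x) x" for x
  have cg: "continuous_map (subtopology X F) euclideanreal g"
  proof (rule pasting_lemma_closed[where I=A and T="fibre X \<pi>" and f=h])
    show "finite A" by fact
  next
    fix y assume y: "y \<in> A"
    have sub: "fibre X \<pi> y \<subseteq> F" unfolding fibre_def F_def using y by auto
    show "closedin (subtopology X F) (fibre X \<pi> y)"
      using closedin_subset_topspace[OF closedin_fibre[OF cont hY] sub] .
    have "F \<inter> fibre X \<pi> y = fibre X \<pi> y" using sub by blast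
    then show "continuous_map (subtopology (subtopology X F) (fibre X \<pi> y)) euclideanreal (h y)"
      using hc[OF y] by (simp add: subtopology_subtopology)
  next
    fix i j x assume "i \<in> A" "j \<in> A" "x \<in> topspace (subtopology X F) \<inter> fibre X \<pi> i \<inter> fibre X \<pi> j"
    then have "i = j" unfolding fibre_def by auto
    then show "h i x = h j x" by simp
  next
    fix x assume "x \<in> topspace (subtopology X F)"
    then have "\<pi> x \<in> A \<and> x \<in> fibre X \<pi> (\<pi> x) \<and> g x = h (\<pi> x) x"
      unfolding F_def fibre_def g_def by auto
    then show "\<exists>j. j \<in> A \<and> x \<in> fibre X \<pi> j \<and> g x = h j x" by blast
  qed
  have cg': "continuous_map (subtopology (ZT X \<pi> A) F) euclideanreal g"
    using cg subtopology_ZT[OF cF FA] by simp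
  have fim: "g ` F \<subseteq> {-M..M}"
  proof
    fix v assume "v \<in> g ` F"
    then obtain x where x: "x \<in> F" "v = g x" by blast
    then have "\<pi> x \<in> A" "x \<in> fibre X \<pi> (\<pi> x)" unfolding F_def fibre_def by auto
    then have "\<bar>g x\<bar> \<le> M" unfolding g_def using hb by blast
    then show "v \<in> {-M..M}" using x by auto
  qed
  obtain e where e: "continuous_map (ZT X \<pi> A) euclideanreal e"
    "\<And>x. x \<in> F \<Longrightarrow> e x = g x" "e ` topspace (ZT X \<pi> A) \<subseteq> {-M..M}"
    using Tietze_extension_closed_real_interval[OF nZ cZF cg' fim] M by auto
  have 1: "continuous_map X euclideanreal e" using cont_ZT_imp[OF e(1)] .
  have 2: "\<forall>x\<in>topspace X. \<bar>e x\<bar> \<le> M" using e(3) unfolding topspace_ZT by (force simp: abs_le_iff image_subset_iff)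
  have 3: "\<forall>y\<in>A. \<forall>x\<in>fibre X \<pi> y. e x = h y x"
  proof (intro ballI)
    fix y x assume "y \<in> A" "x \<in> fibre X \<pi> y"
    then have "x \<in> F" "\<pi> x = y" unfolding F_def fibre_def by auto
    then show "e x = h y x" using e(2) unfolding g_def by auto
  qed
  have 4: "\<forall>x x'. x \<in> topspace X \<longrightarrow> x' \<in> topspace X \<longrightarrow> \<pi> x = \<pi> x' \<longrightarrow> \<pi> x \<notin> A \<longrightarrow> e x = e x'"
    using cont_ZT_const[OF e(1)] by blast
  show ?thesis using 1 2 3 4 by blast
qed


theorem lemma4p5:
  fixes X :: "'a topology" and Y :: "'b topology" and \<pi> :: "'a \<Rightarrow> 'b"
    and z :: "'b \<Rightarrow> 'a" and h :: "'b \<Rightarrow> 'a \<Rightarrow> real"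
  assumes "compact_space X" and "Hausdorff_space X"
    and "compact_space Y" and "Hausdorff_space Y"
    and "fully_closed X Y \<pi>"
    and "\<And>y. y \<in> topspace Y \<Longrightarrow> z y \<in> fibre X \<pi> y"
    and "in_c0_sum X Y \<pi> z h"
  shows "\<exists>f. continuous_map X euclideanreal f \<and>
           (\<forall>y \<in> topspace Y. \<forall>x \<in> fibre X \<pi> y. f x - f (z y) = h y x)"
proof -
  note cX = assms(1) and hX = assms(2) and hY = assms(4) and fc = assms(5) and zf = assms(6)
  have cont: "continuous_map X Y \<pi>" using fc_facts[OF fc] by blast
  have hc: "\<And>y. y \<in> topspace Y \<Longrightarrow> continuous_map (subtopology X (fibre X \<pi> y)) euclideanreal (h y)"
    and hz: "\<And>y. y \<in> topspace Y \<Longrightarrow> h y (z y) = 0"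
    and c0: "\<And>\<epsilon>. \<epsilon> > 0 \<Longrightarrow> finite {y \<in> topspace Y. fibre_norm X \<pi> y (h y) > \<epsilon>}"
    using assms(7) unfolding in_c0_sum_def by auto
  define N where "N y = fibre_norm X \<pi> y (h y)" for y
  have Nb: "\<bar>h y x\<bar> \<le> N y" if y: "y \<in> topspace Y" and x: "x \<in> fibre X \<pi> y" for y x
  proof -
    have "compactin X (fibre X \<pi> y)"
      using closedin_compact_space[OF cX closedin_fibre[OF cont hY]] .
    then have "compactin (subtopology X (fibre X \<pi> y)) (fibre X \<pi> y)"
      by (simp add: compactin_subtopology)
    then have "compactin euclideanreal (h y ` fibre X \<pi> y)"
      using image_compactin hc[OF y] by blast
    then have "bounded (h y ` fibre X \<pi> y)" by (simp add: compact_imp_bounded)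
    then obtain a where a: "\<forall>v\<in>h y ` fibre X \<pi> y. \<bar>v\<bar> \<le> a" unfolding bounded_real by blast
    have "bdd_above ((\<lambda>x. \<bar>h y x\<bar>) ` fibre X \<pi> y)"
      using a by (intro bdd_aboveI[where M=a]) auto
    then show ?thesis unfolding N_def fibre_norm_def using x by (rule cSUP_upper2) simp
  qed
  have N0: "N y \<ge> 0" if "y \<in> topspace Y" for y
    using Nb[OF that zf[OF that]] by simp
  define lev where "lev y = (LEAST k. (1/2::real)^k < N y)" for y
  have levI: "(1/2::real)^(lev y) < N y" if "N y > 0" for y
  proof -
    have "\<exists>k. (1/2::real)^k < N y" using real_arch_pow_inv[OF that] by simp
    then show ?thesis unfolding lev_def by (rule LeastI_ex)
  qed
  have levB: "N y \<le> (1/2::real)^(k - 1)" if "lev y = k" "k > 0" for y k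
  proof -
    have "k - 1 < lev y" using that by simp
    then have "\<not> (1/2::real)^(k-1) < N y" unfolding lev_def by (rule not_less_Least)
    then show ?thesis by simp
  qed
  define Ak where "Ak k = {y \<in> topspace Y. 0 < N y \<and> lev y = k}" for k
  have fAk: "finite (Ak k)" for k
  proof -
    have "Ak k \<subseteq> {y \<in> topspace Y. fibre_norm X \<pi> y (h y) > (1/2)^k}"
      unfolding Ak_def N_def[symmetric] using levI by auto
    then show ?thesis using c0[of "(1/2)^k"] finite_subset by auto
  qed
  define c where "c = Max (insert 2 (N ` Ak 0))"
  have c2: "c \<ge> 2" unfolding c_def using fAk by simp
  have cN: "N y \<le> c" if "y \<in> Ak 0" for y unfolding c_def using fAk that by simp
  have bnd: "\<bar>h y x\<bar> \<le> c * (1/2)^k" if y: "y \<in> Ak k" and x: "x \<in> fibre X \<pi> y" for y x k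
  proof -
    have yt: "y \<in> topspace Y" using y unfolding Ak_def by simp
    have "N y \<le> c * (1/2)^k"
    proof (cases "k = 0")
      case True then show ?thesis using cN y by simp
    next
      case False
      have "lev y = k" using y unfolding Ak_def by simp
      then have "N y \<le> (1/2::real)^(k-1)" using levB False by blast
      also have "\<dots> = 2 * (1/2)^k" using False by (cases k) auto
      also have "\<dots> \<le> c * (1/2)^k" using c2 by (intro mult_right_mono) auto
      finally show ?thesis .
    qed
    then show ?thesis using Nb[OF yt x] by simp
  qed
  have "\<forall>k. \<exists>e. continuous_map X euclideanreal e \<and> (\<forall>x\<in>topspace X. \<bar>e x\<bar> \<le> c * (1/2)^k)
     \<and> (\<forall>y\<in>Ak k. \<forall>x\<in>fibre X \<pi> y. e x = h y x)
     \<and> (\<forall>x x'. x \<in> topspace X \<longrightarrow> x' \<in> topspace X \<longrightarrow> \<pi> x = \<pi> x' \<longrightarrow> \<pi> x \<notin> Ak k \<longrightarrow> e x = e x')"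
  proof
    fix k
    show "\<exists>e. continuous_map X euclideanreal e \<and> (\<forall>x\<in>topspace X. \<bar>e x\<bar> \<le> c * (1/2)^k)
     \<and> (\<forall>y\<in>Ak k. \<forall>x\<in>fibre X \<pi> y. e x = h y x)
     \<and> (\<forall>x x'. x \<in> topspace X \<longrightarrow> x' \<in> topspace X \<longrightarrow> \<pi> x = \<pi> x' \<longrightarrow> \<pi> x \<notin> Ak k \<longrightarrow> e x = e x')"
      apply (rule extension[OF cX hX hY fc fAk])
      using hc bnd c2 unfolding Ak_def by auto
  qed
  then obtain e where e: "\<And>k. continuous_map X euclideanreal (e k)"
    "\<And>k x. x \<in> topspace X \<Longrightarrow> \<bar>e k x\<bar> \<le> c * (1/2)^k"
    "\<And>k y x. y \<in> Ak k \<Longrightarrow> x \<in> fibre X \<pi> y \<Longrightarrow> e k x = h y x"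
    "\<And>k x x'. x \<in> topspace X \<Longrightarrow> x' \<in> topspace X \<Longrightarrow> \<pi> x = \<pi> x' \<Longrightarrow> \<pi> x \<notin> Ak k \<Longrightarrow> e k x = e k x'"
    by metis
  define f where "f x = (\<Sum>k. e k x)" for x
  have sumM: "summable (\<lambda>k. c * (1/2::real)^k)"
    by (intro summable_mult summable_geometric) simp
  have summ: "summable (\<lambda>k. e k x)" if "x \<in> topspace X" for x
    by (rule summable_comparison_test'[OF sumM, of 0]) (use e(2)[OF that] in simp)
  have ul: "uniform_limit (topspace X) (\<lambda>n x. \<Sum>i<n. e i x) f sequentially"
    unfolding f_def by (rule Weierstrass_m_test[OF _ sumM]) (use e(2) in simp)
  have cf: "continuous_map X euclideanreal f"
  proof -
    have "continuous_map X Met_TC.mtopology f"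
    proof (rule Met_TC.continuous_map_uniform_limit[where F=sequentially and f="\<lambda>n x. \<Sum>i<n. e i x"])
      show "\<forall>\<^sub>F n in sequentially. continuous_map X Met_TC.mtopology (\<lambda>x. \<Sum>i<n. e i x)"
        by (intro always_eventually allI) (simp add: continuous_map_sum e(1))
    next
      fix \<epsilon> :: real assume "\<epsilon> > 0"
      then show "\<forall>\<^sub>F n in sequentially. \<forall>x\<in>topspace X. f x \<in> UNIV \<and> dist (\<Sum>i<n. e i x) (f x) < \<epsilon>"
        using uniform_limitD[OF ul] by simp
    qed simp
    then show ?thesis by simp
  qed
  have main: "f x - f (z y) = h y x" if y: "y \<in> topspace Y" and x: "x \<in> fibre X \<pi> y" for y x
  proof -
    have zy: "z y \<in> fibre X \<pi> y" using zf[OF y] .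
    have xt: "x \<in> topspace X" "\<pi> x = y" using x unfolding fibre_def by auto
    have zt: "z y \<in> topspace X" "\<pi> (z y) = y" using zy unfolding fibre_def by auto
    have "f x - f (z y) = (\<Sum>k. e k x - e k (z y))"
      unfolding f_def using suminf_diff[OF summ[OF xt(1)] summ[OF zt(1)]] by simp
    also have "\<dots> = h y x"
    proof (cases "N y > 0")
      case True
      have yA: "y \<in> Ak (lev y)" unfolding Ak_def using y True by simp
      have "(\<lambda>k. e k x - e k (z y)) = (\<lambda>k. if k = lev y then h y x else 0)"
      proof
        fix k show "e k x - e k (z y) = (if k = lev y then h y x else 0)"
        proof (cases "k = lev y")
          case True
          then show ?thesis using e(3)[OF yA x] e(3)[OF yA zy] hz[OF y] by simp
        next
          case False
          then have "y \<notin> Ak k" unfolding Ak_def by auto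
          then show ?thesis using e(4)[OF xt(1) zt(1)] xt zt False by simp
        qed
      qed
      moreover have "(\<lambda>k. if k = lev y then h y x else 0) sums h y x"
        using sums_single[of "lev y" "\<lambda>_. h y x"] by simp
      ultimately show ?thesis by (simp add: sums_iff)
    next
      case False
      then have "N y = 0" using N0[OF y] by simp
      then have h0: "h y x = 0" using Nb[OF y x] by simp
      have "e k x - e k (z y) = 0" for k
      proof -
        have "y \<notin> Ak k" unfolding Ak_def using False by auto
        then show ?thesis using e(4)[OF xt(1) zt(1)] xt zt by simp
      qed
      then show ?thesis using h0 by simp
    qed
    finally show ?thesis .
  qed
  show ?thesis using cf main by blast
qed

end
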